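(* Fix $0<\epsilon<1/(4L)$ where $L=33$. Let $A\in\mathbb{R}^{m\times n}$ satisfy the RRCP with respect to $G$ with constant $\epsilon$ and each $W_i\in\mathbb{R}^{n_i\times n_{i-1}}$ satisfy the WDC with constant $\epsilon$. Then for all $x,y\in\mathbb{R}^k\setminus\{0\}$, the angle $\theta_1:=\angle(A_{G(x)}G(x),A_{G(y)}G(y))$ is well-defined and $|\cos\theta_1-\cos\varphi(\theta_d)|\leqslant4L\epsilon$, where $\theta_d=\angle(G(x),G(y))$ and $\varphi(\theta):=\cos^{-1}\!\big(\frac{(\pi-2\theta)\cos\theta+2\sin\theta}{\pi}\big)$.
   Context: Network: $k=n_0<\dots<n_d=n$, $G(x)=\mathrm{relu}(W_d\cdots\mathrm{relu}(W_1x)\cdots)$. $W_{+,x}:=\mathrm{diag}(Wx>0)W$. $\theta_{x,y}=\angle(x,y)$, $\hat x=x/\|x\|$, $M_{\hat x\leftrightarrow\hat y}$ the symmetric matrix swapping $\hat x,\hat y$ and vanishing on $\mathrm{span}(x,y)^\perp$ ($\pm\hat x\hat x^\top$ in degenerate cases). WDC with constant $\epsilon$: $\|W_{+,x}^\top W_{+,y}-(\frac{\pi-\theta_{x,y}}{2\pi}I+\frac{\sin\theta_{x,y}}{2\pi}M_{\hat x\leftrightarrow\hat y})\|\leqslant\epsilon$ for all nonzero $x,y$. $A_z:=\mathrm{diag}(\mathrm{sgn}(Az))A$ ($\mathrm{sgn}(0)=0$); $\Phi_{z,w}=\frac{\pi-2\theta_{z,w}}{\pi}I_n+\frac{2\sin\theta_{z,w}}{\pi}M_{\hat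 z\leftrightarrow\hat w}$ for $z,w\neq0$, else $0$. RRCP with constant $\epsilon$: $|\langle(A_{G(x)}^\top A_{G(y)}-\Phi_{G(x),G(y)})(G(x_1)-G(x_2)),G(x_3)-G(x_4)\rangle|\leqslant L\epsilon\|G(x_1)-G(x_2)\|\|G(x_3)-G(x_4)\|$ for all $x,y,x_1,\dots,x_4$, $L=33$. *)

theory Defs
  imports Complex_Main "Jordan_Normal_Form.Matrix"
begin

definition vnorm :: "real vec \<Rightarrow> real" where
  "vnorm v = sqrt (v \<bullet> v)"

definition unitv :: "real vec \<Rightarrow> real vec" where
  "unitv v = (1 / vnorm v) \<cdot>\<^sub>v v"

definition vangle :: "real vec \<Rightarrow> real vec \<Rightarrow> real" where
  "vangle u v = arccos ((u \<bullet> v) / (vnorm u * vnorm v))"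

definition outer :: "real vec \<Rightarrow> real vec \<Rightarrow> real mat" where
  "outer u v = mat (dim_vec u) (dim_vec v) (\<lambda>(i,j). u $ i * v $ j)"

definition opnorm :: "real mat \<Rightarrow> real" where
  "opnorm M = Sup {vnorm (M *\<^sub>v v) | v. v \<in> carrier_vec (dim_col M) \<and> vnorm v \<le> 1}"

definition relu :: "real vec \<Rightarrow> real vec" where
  "relu v = vec (dim_vec v) (\<lambda>i. max (v $ i) 0)"

text \<open>G(x) = relu(W_d ... relu(W_1 x)...), the list is [W_1, ..., W_d]\<close>
definition net :: "real mat list \<Rightarrow> real vec \<Rightarrow> real vec" where
  "net Ws x = foldl (\<lambda>v W. relu (W *\<^sub>v v)) x Ws"

definition Wplus :: "real mat \<Rightarrow> real vec \<Rightarrow> real mat" where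
  "Wplus W x = mat (dim_row W) (dim_col W)
     (\<lambda>(i,j). if (W *\<^sub>v x) $ i > 0 then W $$ (i,j) else 0)"

text \<open>A_z = diag(sgn(Az)) A, with sgn 0 = 0\<close>
definition Asgn :: "real mat \<Rightarrow> real vec \<Rightarrow> real mat" where
  "Asgn A z = mat (dim_row A) (dim_col A) (\<lambda>(i,j). sgn ((A *\<^sub>v z) $ i) * A $$ (i,j))"

text \<open>M_{x^ <-> y^}: the symmetric matrix with M x^ = y^, M y^ = x^, vanishing on
  span(x,y)^perp.\<close>
definition Mswap :: "real vec \<Rightarrow> real vec \<Rightarrow> real mat" where
  "Mswap x y = (let a = unitv x; b = unitv y; c = a \<bullet> b in
     if a = b then outer a a
     else if a = - b then - outer a a
     else (1 / (1 - c\<^sup>2)) \<cdot>\<^sub>m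
            ((outer a b + outer b a) - c \<cdot>\<^sub>m (outer a a + outer b b)))"

definition WDC :: "real mat \<Rightarrow> real \<Rightarrow> bool" where
  "WDC W eps \<longleftrightarrow>
     (\<forall>x y. x \<in> carrier_vec (dim_col W) \<and> y \<in> carrier_vec (dim_col W) \<and>
            x \<noteq> 0\<^sub>v (dim_col W) \<and> y \<noteq> 0\<^sub>v (dim_col W) \<longrightarrow>
        (let \<theta> = vangle x y in
          opnorm ((Wplus W x)\<^sup>T * Wplus W y -
                  ((pi - \<theta>) / (2 * pi) \<cdot>\<^sub>m 1\<^sub>m (dim_col W)
                   + (sin \<theta> / (2 * pi)) \<cdot>\<^sub>m Mswap x y)) \<le> eps))"

definition Phi :: "nat \<Rightarrow> real vec \<Rightarrow> real vec \<Rightarrow> real mat" where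
  "Phi n z w = (if z \<noteq> 0\<^sub>v n \<and> w \<noteq> 0\<^sub>v n then
      (let \<theta> = vangle z w in
        ((pi - 2 * \<theta>) / pi) \<cdot>\<^sub>m 1\<^sub>m n + (2 * sin \<theta> / pi) \<cdot>\<^sub>m Mswap z w)
     else 0\<^sub>m n n)"

definition LL :: real where "LL = 33"

definition RRCP :: "real mat \<Rightarrow> real mat list \<Rightarrow> nat \<Rightarrow> nat \<Rightarrow> real \<Rightarrow> bool" where
  "RRCP A Ws k n eps \<longleftrightarrow>
     (\<forall>x y x1 x2 x3 x4.
        x \<in> carrier_vec k \<and> y \<in> carrier_vec k \<and> x1 \<in> carrier_vec k \<and>
        x2 \<in> carrier_vec k \<and> x3 \<in> carrier_vec k \<and> x4 \<in> carrier_vec k \<longrightarrow>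
        \<bar>((((Asgn A (net Ws x))\<^sup>T * Asgn A (net Ws y) - Phi n (net Ws x) (net Ws y))
            *\<^sub>v (net Ws x1 - net Ws x2)) \<bullet> (net Ws x3 - net Ws x4))\<bar>
        \<le> LL * eps * vnorm (net Ws x1 - net Ws x2) * vnorm (net Ws x3 - net Ws x4))"

definition phi :: "real \<Rightarrow> real" where
  "phi \<theta> = arccos (((pi - 2 * \<theta>) * cos \<theta> + 2 * sin \<theta>) / pi)"

end

theory Submission
  imports Defs
begin

lemma dot_self_nonneg: "(v::real vec) \<bullet> v \<ge> 0"
  unfolding scalar_prod_def by (intro sum_nonneg) auto

lemma dot_self_pos:
  assumes "(v::real vec) \<in> carrier_vec n" "v \<noteq> 0\<^sub>v n"
  shows "v \<bullet> v > 0"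
proof -
  obtain i where i: "i < n" "v $ i \<noteq> 0" using assms by (metis carrier_vecD eq_vecI index_zero_vec)
  have "v $ i * v $ i \<le> v \<bullet> v" unfolding scalar_prod_def
    using i assms by (intro member_le_sum) auto
  moreover have "v $ i * v $ i > 0" using i not_real_square_gt_zero by blast
  ultimately show ?thesis by linarith
qed

lemma vnorm_nonneg: "vnorm v \<ge> 0" unfolding vnorm_def using dot_self_nonneg[of v] by simp
lemma vnorm_sq: "(vnorm v)\<^sup>2 = v \<bullet> v" unfolding vnorm_def using dot_self_nonneg[of v] by simp
lemma vnorm_pos: "(v::real vec) \<in> carrier_vec n \<Longrightarrow> v \<noteq> 0\<^sub>v n \<Longrightarrow> vnorm v > 0"
  unfolding vnorm_def using dot_self_pos by simp

lemma CS_sum: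
  fixes a b :: "nat \<Rightarrow> real"
  shows "(\<Sum>i\<in>I. a i * b i)\<^sup>2 \<le> (\<Sum>i\<in>I. (a i)\<^sup>2) * (\<Sum>i\<in>I. (b i)\<^sup>2)"
proof (cases "(\<Sum>i\<in>I. (b i)\<^sup>2) > 0")
  case False
  then consider "\<And>i. i\<in>I \<Longrightarrow> b i = 0" | "infinite I"
    by (metis (mono_tags, lifting) sum_pos2 zero_le_power2 zero_less_power2)
  thus ?thesis
    by fastforce
next
  case True
  define r where "r \<equiv> (\<Sum>i\<in>I. a i * b i) / (\<Sum>i\<in>I. (b i)\<^sup>2)"
  have "0 \<le> (\<Sum>i\<in>I. (a i - r * b i)\<^sup>2)"
    by (simp add: sum_nonneg)
  also have "... = (\<Sum>i\<in>I. (a i)\<^sup>2) - 2 * r * (\<Sum>i\<in>I. a i * b i) + r\<^sup>2 * (\<Sum>i\<in>I. (b i)\<^sup>2)"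
    by (simp add: algebra_simps power2_eq_square sum_distrib_left flip: sum.distrib)
  also have "\<dots> = (\<Sum>i\<in>I. (a i)\<^sup>2) - ((\<Sum>i\<in>I. a i * b i))\<^sup>2 / (\<Sum>i\<in>I. (b i)\<^sup>2)"
    by (simp add: r_def power2_eq_square)
  finally have "0 \<le> (\<Sum>i\<in>I. (a i)\<^sup>2) - ((\<Sum>i\<in>I. a i * b i))\<^sup>2 / (\<Sum>i\<in>I. (b i)\<^sup>2)" .
  hence "((\<Sum>i\<in>I. a i * b i))\<^sup>2 / (\<Sum>i\<in>I. (b i)\<^sup>2) \<le> (\<Sum>i\<in>I. (a i)\<^sup>2)"
    by (simp add: le_diff_eq)
  thus "((\<Sum>i\<in>I. a i * b i))\<^sup>2 \<le> (\<Sum>i\<in>I. (a i)\<^sup>2) * (\<Sum>i\<in>I. (b i)\<^sup>2)"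
    by (simp add: pos_divide_le_eq True)
qed

lemma CS:
  assumes "dim_vec (u::real vec) = dim_vec v"
  shows "\<bar>u \<bullet> v\<bar> \<le> vnorm u * vnorm v"
proof -
  have "(u \<bullet> v)\<^sup>2 \<le> (u \<bullet> u) * (v \<bullet> v)"
    using CS_sum[of "\<lambda>i. u $ i" "\<lambda>i. v $ i" "{0..<dim_vec v}"] assms
    by (simp add: scalar_prod_def power2_eq_square)
  hence "sqrt ((u \<bullet> v)\<^sup>2) \<le> sqrt ((u \<bullet> u) * (v \<bullet> v))" by (rule real_sqrt_le_mono)
  thus ?thesis unfolding vnorm_def by (simp add: real_sqrt_mult)
qed

lemma vnorm_smult: "vnorm (c \<cdot>\<^sub>v v) = \<bar>c\<bar> * vnorm v"
proof -
  have "(c \<cdot>\<^sub>v v) \<bullet> (c \<cdot>\<^sub>v v) = (c * c) * (v \<bullet> v)" by simp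
  thus ?thesis unfolding vnorm_def by (simp add: real_sqrt_mult)
qed

lemma smult_mat_vec: "A \<in> carrier_mat r c \<Longrightarrow> v \<in> carrier_vec c \<Longrightarrow> ((k::real) \<cdot>\<^sub>m A) *\<^sub>v v = k \<cdot>\<^sub>v (A *\<^sub>v v)"
  by (intro eq_vecI) (auto simp: scalar_prod_def sum_distrib_left mult.assoc)

lemma smult_one_mat_vec: "v \<in> carrier_vec b \<Longrightarrow> ((c::real) \<cdot>\<^sub>m 1\<^sub>m b) *\<^sub>v v = c \<cdot>\<^sub>v v"
  by (simp add: smult_mat_vec[of "1\<^sub>m b" b b])

lemma opnorm_half:
  assumes "b > 0"
  shows "opnorm ((-1/2) \<cdot>\<^sub>m 1\<^sub>m b) \<ge> 1/2"
proof -
  let ?S = "{vnorm (((-1/2) \<cdot>\<^sub>m 1\<^sub>m b) *\<^sub>v v) | v. v \<in> carrier_vec (dim_col ((-1/2::real) \<cdot>\<^sub>m 1\<^sub>m b)) \<and> vnorm v \<le> 1}"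
  have bdd: "bdd_above ?S"
    by (rule bdd_aboveI[of _ "1/2"]) (auto simp: smult_one_mat_vec vnorm_smult)
  have "vnorm (unit_vec b 0) = 1" unfolding vnorm_def using assms by simp
  hence "1/2 \<in> ?S" using assms
    by (intro CollectI exI[of _ "unit_vec b 0"]) (auto simp: smult_one_mat_vec vnorm_smult)
  hence "1/2 \<le> Sup ?S" using bdd by (rule cSup_upper)
  thus ?thesis unfolding opnorm_def .
qed

lemma vangle_self:
  assumes "(x::real vec) \<in> carrier_vec b" "x \<noteq> 0\<^sub>v b"
  shows "vangle x x = 0"
proof -
  have "x \<bullet> x > 0" using dot_self_pos assms by blast
  moreover have "vnorm x * vnorm x = x \<bullet> x" using vnorm_sq[of x] by (simp add: power2_eq_square)
  ultimately show ?thesis unfolding vangle_def by simp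
qed

lemma relu_carrier: "relu v \<in> carrier_vec (dim_vec v)" unfolding relu_def by simp

lemma layer_zero: "W \<in> carrier_mat a b \<Longrightarrow> relu (W *\<^sub>v 0\<^sub>v b) = 0\<^sub>v a"
  unfolding relu_def by (intro eq_vecI) auto

lemma layer_nonzero:
  assumes W: "W \<in> carrier_mat a b" and wdc: "WDC W eps" and eps: "eps < 1/2"
    and x: "x \<in> carrier_vec b" "x \<noteq> 0\<^sub>v b"
  shows "relu (W *\<^sub>v x) \<noteq> 0\<^sub>v a"
proof
  assume h: "relu (W *\<^sub>v x) = 0\<^sub>v a"
  have pos: "\<not> (W *\<^sub>v x) $ i > 0" if "i < a" for i
  proof -
    have "relu (W *\<^sub>v x) $ i = 0" using h that by simp
    thus ?thesis using that W unfolding relu_def by auto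
  qed
  have Wp: "Wplus W x = 0\<^sub>m a b"
    by (rule eq_matI) (use pos W in \<open>auto simp: Wplus_def\<close>)
  have b0: "b > 0"
  proof (rule ccontr)
    assume "\<not> b > 0" hence "b = 0" by simp
    hence "x = 0\<^sub>v b" using x(1) by (intro eq_vecI) auto
    thus False using x(2) by simp
  qed
  have vxx: "vangle x x = 0" using vangle_self x by blast
  have Mc: "Mswap x x \<in> carrier_mat b b" using x
    by (simp add: Mswap_def Let_def outer_def unitv_def)
  have "opnorm ((Wplus W x)\<^sup>T * Wplus W x -
                  ((pi - vangle x x) / (2 * pi) \<cdot>\<^sub>m 1\<^sub>m (dim_col W)
                   + (sin (vangle x x) / (2 * pi)) \<cdot>\<^sub>m Mswap x x)) \<le> eps"
    using wdc x W unfolding WDC_def Let_def by auto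
  moreover have "(Wplus W x)\<^sup>T * Wplus W x -
                  ((pi - vangle x x) / (2 * pi) \<cdot>\<^sub>m 1\<^sub>m (dim_col W)
                   + (sin (vangle x x) / (2 * pi)) \<cdot>\<^sub>m Mswap x x) = (-1/2) \<cdot>\<^sub>m 1\<^sub>m b"
    unfolding Wp vxx using W Mc by (intro eq_matI) (auto simp: scalar_prod_def)
  ultimately show False using opnorm_half[OF b0] eps by simp
qed

lemma net_Nil[simp]: "net [] x = x" unfolding net_def by simp
lemma net_Cons[simp]: "net (W # Ws) x = net Ws (relu (W *\<^sub>v x))" unfolding net_def by simp

lemma net_props:
  "length ns = length Ws + 1 \<Longrightarrow> (\<forall>i<length Ws. Ws!i \<in> carrier_mat (ns!(i+1)) (ns!i)) \<Longrightarrow>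
   (\<forall>i<length Ws. WDC (Ws!i) eps) \<Longrightarrow> eps < 1/2 \<Longrightarrow> x \<in> carrier_vec (ns!0) \<Longrightarrow>
   net Ws x \<in> carrier_vec (ns!length Ws) \<and> net Ws (0\<^sub>v (ns!0)) = 0\<^sub>v (ns!length Ws) \<and>
   (x \<noteq> 0\<^sub>v (ns!0) \<longrightarrow> net Ws x \<noteq> 0\<^sub>v (ns!length Ws))"
proof (induction Ws arbitrary: ns x)
  case Nil
  then show ?case by simp
next
  case (Cons W Ws)
  obtain n0 ns' where ns: "ns = n0 # ns'" using Cons.prems(1) by (cases ns) auto
  have len: "length ns' = length Ws + 1" using Cons.prems(1) ns by simp
  have dims: "\<forall>i<length Ws. Ws!i \<in> carrier_mat (ns'!(i+1)) (ns'!i)"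
    using Cons.prems(2) ns by fastforce
  have wdcs: "\<forall>i<length Ws. WDC (Ws!i) eps" using Cons.prems(3) by fastforce
  have W: "W \<in> carrier_mat (ns'!0) n0" using Cons.prems(2) ns by fastforce
  have Wd: "WDC W eps" using Cons.prems(3) by fastforce
  have x: "x \<in> carrier_vec n0" using Cons.prems(5) ns by simp
  have x': "relu (W *\<^sub>v x) \<in> carrier_vec (ns'!0)" using W relu_carrier[of "W *\<^sub>v x"] by simp
  note IH = Cons.IH[OF len dims wdcs Cons.prems(4) x']
  have z: "relu (W *\<^sub>v 0\<^sub>v n0) = 0\<^sub>v (ns'!0)" using layer_zero[OF W] .
  show ?case
  proof (intro conjI impI)
    show "net (W # Ws) x \<in> carrier_vec (ns ! length (W # Ws))" using IH ns by simp
    show "net (W # Ws) (0\<^sub>v (ns ! 0)) = 0\<^sub>v (ns ! length (W # Ws))" using IH ns z by simp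
    assume "x \<noteq> 0\<^sub>v (ns ! 0)"
    hence "relu (W *\<^sub>v x) \<noteq> 0\<^sub>v (ns'!0)" using layer_nonzero[OF W Wd Cons.prems(4) x] ns by simp
    thus "net (W # Ws) x \<noteq> 0\<^sub>v (ns ! length (W # Ws))" using IH ns by simp
  qed
qed

lemma net_nonneg:
  assumes "Ws \<noteq> []" "i < dim_vec (net Ws x)"
  shows "net Ws x $ i \<ge> 0"
proof -
  obtain Vs W where "Ws = Vs @ [W]" using assms(1) by (metis rev_exhaust)
  hence "net Ws x = relu (W *\<^sub>v net Vs x)" unfolding net_def by simp
  thus ?thesis using assms(2) unfolding relu_def by simp
qed

lemma outer_carrier: "a \<in> carrier_vec n \<Longrightarrow> b \<in> carrier_vec n \<Longrightarrow> outer a b \<in> carrier_mat n n"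
  unfolding outer_def by simp

lemma unitv_carrier: "x \<in> carrier_vec n \<Longrightarrow> unitv x \<in> carrier_vec n"
  unfolding unitv_def by simp

lemma Mswap_carrier:
  assumes "x \<in> carrier_vec n" "y \<in> carrier_vec n"
  shows "Mswap x y \<in> carrier_mat n n"
  using outer_carrier[OF unitv_carrier[OF assms(1)] unitv_carrier[OF assms(1)]]
    outer_carrier[OF unitv_carrier[OF assms(1)] unitv_carrier[OF assms(2)]]
    outer_carrier[OF unitv_carrier[OF assms(2)] unitv_carrier[OF assms(1)]]
    outer_carrier[OF unitv_carrier[OF assms(2)] unitv_carrier[OF assms(2)]]
  unfolding Mswap_def Let_def by auto

lemma outer_mult:
  assumes "a \<in> carrier_vec n" "b \<in> carrier_vec n" "w \<in> carrier_vec n"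
  shows "outer a b *\<^sub>v w = (b \<bullet> w) \<cdot>\<^sub>v a"
  using assms unfolding outer_def
  apply (intro eq_vecI)
  apply (auto simp: scalar_prod_def)
  apply (subst sum_distrib_right)
  apply (simp add: ac_simps)
  done

lemma outer_form:
  assumes "a \<in> carrier_vec n" "b \<in> carrier_vec n" "w \<in> carrier_vec n" "z \<in> carrier_vec n"
  shows "(outer a b *\<^sub>v w) \<bullet> z = (b \<bullet> w) * (a \<bullet> z)"
  using assms by (simp add: outer_mult)

lemma unitv_dot:
  assumes "(x::real vec) \<in> carrier_vec n" "x \<noteq> 0\<^sub>v n"
  shows "unitv x \<bullet> unitv x = 1"
proof -
  have p: "x \<bullet> x > 0" using dot_self_pos assms by blast
  have "unitv x \<bullet> unitv x = (1 / vnorm x) * (1 / vnorm x) * (x \<bullet> x)"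
    unfolding unitv_def by simp
  also have "\<dots> = 1" using vnorm_sq[of x] p by (simp add: power2_eq_square)
  finally show ?thesis .
qed

lemma unitv_scale:
  assumes "(x::real vec) \<in> carrier_vec n" "x \<noteq> 0\<^sub>v n"
  shows "vnorm x \<cdot>\<^sub>v unitv x = x"
  using vnorm_pos[OF assms] assms unfolding unitv_def by (intro eq_vecI) auto

lemma dot_minus_self:
  assumes "a \<in> carrier_vec n" "(b::real vec) \<in> carrier_vec n"
  shows "(a - b) \<bullet> (a - b) = a \<bullet> a - 2 * (a \<bullet> b) + b \<bullet> b"
  using assms comm_scalar_prod[OF assms(2,1)]
  by (simp add: minus_scalar_prod_distrib scalar_prod_minus_distrib)

lemma dot_plus_self:
  assumes "a \<in> carrier_vec n" "(b::real vec) \<in> carrier_vec n"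
  shows "(a + b) \<bullet> (a + b) = a \<bullet> a + 2 * (a \<bullet> b) + b \<bullet> b"
  using assms comm_scalar_prod[OF assms(2,1)]
  by (simp add: add_scalar_prod_distrib scalar_prod_add_distrib)

lemma bil_add:
  assumes "A \<in> carrier_mat n n" "B \<in> carrier_mat n n" "b \<in> carrier_vec n" "(a::real vec) \<in> carrier_vec n"
  shows "((A + B) *\<^sub>v b) \<bullet> a = (A *\<^sub>v b) \<bullet> a + (B *\<^sub>v b) \<bullet> a"
proof -
  have "(A + B) *\<^sub>v b = A *\<^sub>v b + B *\<^sub>v b" by (rule add_mult_distrib_mat_vec[OF assms(1-3)])
  moreover have "A *\<^sub>v b \<in> carrier_vec n" "B *\<^sub>v b \<in> carrier_vec n" using assms by auto
  ultimately show ?thesis using add_scalar_prod_distrib assms(4) by metis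
qed

lemma bil_minus:
  assumes "A \<in> carrier_mat n n" "B \<in> carrier_mat n n" "b \<in> carrier_vec n" "(a::real vec) \<in> carrier_vec n"
  shows "((A - B) *\<^sub>v b) \<bullet> a = (A *\<^sub>v b) \<bullet> a - (B *\<^sub>v b) \<bullet> a"
proof -
  have "(A - B) *\<^sub>v b = A *\<^sub>v b - B *\<^sub>v b" by (rule minus_mult_distrib_mat_vec[OF assms(1-3)])
  moreover have "A *\<^sub>v b \<in> carrier_vec n" "B *\<^sub>v b \<in> carrier_vec n" using assms by auto
  ultimately show ?thesis using minus_scalar_prod_distrib assms(4) by metis
qed

lemma bil_smult:
  assumes "A \<in> carrier_mat n n" "b \<in> carrier_vec n" "(a::real vec) \<in> carrier_vec n"
  shows "((c \<cdot>\<^sub>m A) *\<^sub>v b) \<bullet> a = c * ((A *\<^sub>v b) \<bullet> a)"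
proof -
  have "(c \<cdot>\<^sub>m A) *\<^sub>v b = c \<cdot>\<^sub>v (A *\<^sub>v b)" by (rule smult_mat_vec[OF assms(1,2)])
  moreover have "dim_vec (A *\<^sub>v b) = dim_vec a" using assms by auto
  ultimately show ?thesis by simp
qed

lemma Mswap_unit:
  assumes a: "a \<in> carrier_vec n" and b: "(b::real vec) \<in> carrier_vec n"
    and aa: "a \<bullet> a = 1" and bb: "b \<bullet> b = 1"
  shows "((if a = b then outer a a
     else if a = - b then - outer a a
     else (1 / (1 - (a \<bullet> b)\<^sup>2)) \<cdot>\<^sub>m
            ((outer a b + outer b a) - (a \<bullet> b) \<cdot>\<^sub>m (outer a a + outer b b))) *\<^sub>v b) \<bullet> a = 1"
proof -
  have ba: "b \<bullet> a = a \<bullet> b" using comm_scalar_prod[OF b a] .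
  note oc = outer_carrier[OF a a] outer_carrier[OF a b] outer_carrier[OF b a] outer_carrier[OF b b]
  show ?thesis
  proof (cases "a = b")
    case True
    then show ?thesis using b bb outer_form[OF b b b b] by simp
  next
    case False
    note F1 = False
    show ?thesis
    proof (cases "a = - b")
      case True
      have "a \<bullet> b = - 1" using True b bb by simp
      have "((- outer a a) *\<^sub>v b) \<bullet> a = - ((outer a a *\<^sub>v b) \<bullet> a)" using oc(1) b a by simp
      also have "\<dots> = 1" using \<open>a \<bullet> b = - 1\<close> aa by (simp add: outer_form[OF a a b a])
      finally show ?thesis unfolding if_not_P[OF F1] if_P[OF True] .
    next
      case False
      let ?c = "a \<bullet> b"
      have c1: "?c \<noteq> 1"
      proof
        assume "?c = 1"
        hence "(a - b) \<bullet> (a - b) = 0" using dot_minus_self[OF a b] aa bb by simp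
        moreover have "a - b \<in> carrier_vec n" using a b by simp
        moreover have "a - b \<noteq> 0\<^sub>v n"
        proof
          assume h: "a - b = 0\<^sub>v n"
          have "a = b"
          proof (rule eq_vecI)
            fix i assume "i < dim_vec b"
            hence i: "i < n" using b by simp
            have "(a - b) $ i = 0" using h i by simp
            thus "a $ i = b $ i" using i a b by simp
          qed (use a b in simp)
          thus False using F1 by simp
        qed
        ultimately show False using dot_self_pos by fastforce
      qed
      have c2: "?c \<noteq> -1"
      proof
        assume "?c = -1"
        hence "(a + b) \<bullet> (a + b) = 0" using dot_plus_self[OF a b] aa bb by simp
        moreover have "a + b \<in> carrier_vec n" using a b by simp
        moreover have "a + b \<noteq> 0\<^sub>v n"
        proof
          assume h: "a + b = 0\<^sub>v n"
          have "a = - b"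
          proof (rule eq_vecI)
            fix i assume "i < dim_vec (- b)"
            hence i: "i < n" using b by simp
            have "(a + b) $ i = 0" using h i by simp
            thus "a $ i = (- b) $ i" using i a b by simp
          qed (use a b in simp)
          thus False using False by simp
        qed
        ultimately show False using dot_self_pos by fastforce
      qed
      have csq: "1 - ?c\<^sup>2 \<noteq> 0" using c1 c2
        by (metis eq_iff_diff_eq_0 power2_eq_1_iff)
      let ?N = "(outer a b + outer b a) - ?c \<cdot>\<^sub>m (outer a a + outer b b)"
      have S1: "outer a b + outer b a \<in> carrier_mat n n" using oc by simp
      have S3: "outer a a + outer b b \<in> carrier_mat n n" using oc by simp
      have S2: "?c \<cdot>\<^sub>m (outer a a + outer b b) \<in> carrier_mat n n" using S3 by simp
      have Nc: "?N \<in> carrier_mat n n" using S2 by (rule minus_carrier_mat)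
      have "(?N *\<^sub>v b) \<bullet> a = ((outer a b + outer b a) *\<^sub>v b) \<bullet> a - ?c * (((outer a a + outer b b) *\<^sub>v b) \<bullet> a)"
        by (simp only: bil_minus[OF S1 S2 b a] bil_smult[OF S3 b a])
      also have "\<dots> = ((outer a b *\<^sub>v b) \<bullet> a + (outer b a *\<^sub>v b) \<bullet> a)
           - ?c * ((outer a a *\<^sub>v b) \<bullet> a + (outer b b *\<^sub>v b) \<bullet> a)"
        by (simp only: bil_add[OF oc(2) oc(3) b a] bil_add[OF oc(1) oc(4) b a])
      also have "\<dots> = ((b \<bullet> b) * (a \<bullet> a) + (a \<bullet> b) * (b \<bullet> a)) - ?c * ((a \<bullet> b) * (a \<bullet> a) + (b \<bullet> b) * (b \<bullet> a))"
        by (simp only: outer_form[OF a b b a] outer_form[OF b a b a] outer_form[OF a a b a] outer_form[OF b b b a])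
      also have "\<dots> = 1 - ?c\<^sup>2"
        unfolding aa bb ba by (simp add: power2_eq_square)
      finally have N1: "(?N *\<^sub>v b) \<bullet> a = 1 - ?c\<^sup>2" .
      have "(((1 / (1 - ?c\<^sup>2)) \<cdot>\<^sub>m ?N) *\<^sub>v b) \<bullet> a = (1 / (1 - ?c\<^sup>2)) * ((?N *\<^sub>v b) \<bullet> a)"
        by (rule bil_smult[OF Nc b a])
      also have "\<dots> = 1" using N1 csq by simp
      finally show ?thesis unfolding if_not_P[OF F1] if_not_P[OF False] .
    qed
  qed
qed

lemma Mswap_form:
  assumes x: "(x::real vec) \<in> carrier_vec n" "x \<noteq> 0\<^sub>v n" and y: "y \<in> carrier_vec n" "y \<noteq> 0\<^sub>v n"
  shows "(Mswap x y *\<^sub>v y) \<bullet> x = vnorm x * vnorm y"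
proof -
  let ?a = "unitv x" and ?b = "unitv y"
  have a: "?a \<in> carrier_vec n" and b: "?b \<in> carrier_vec n" using unitv_carrier x y by auto
  have M: "Mswap x y \<in> carrier_mat n n" using Mswap_carrier x y by auto
  have "(Mswap x y *\<^sub>v (vnorm y \<cdot>\<^sub>v ?b)) \<bullet> (vnorm x \<cdot>\<^sub>v ?a) = (Mswap x y *\<^sub>v y) \<bullet> x"
    by (simp only: unitv_scale[OF x] unitv_scale[OF y])
  hence "(Mswap x y *\<^sub>v y) \<bullet> x = (Mswap x y *\<^sub>v (vnorm y \<cdot>\<^sub>v ?b)) \<bullet> (vnorm x \<cdot>\<^sub>v ?a)" by simp
  also have "\<dots> = vnorm x * vnorm y * ((Mswap x y *\<^sub>v ?b) \<bullet> ?a)"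
    using M a b by (simp add: mult_mat_vec[OF M b])
  also have "(Mswap x y *\<^sub>v ?b) \<bullet> ?a = 1"
    using Mswap_unit[OF a b unitv_dot[OF x] unitv_dot[OF y]] unfolding Mswap_def Let_def .
  finally show ?thesis by simp
qed

lemma g_bound:
  assumes "0 \<le> t" "t \<le> pi/2"
  shows "0 \<le> (pi - 2 * t) * cos t + 2 * sin t \<and> (pi - 2 * t) * cos t + 2 * sin t \<le> pi"
proof
  have "0 \<le> cos t" using assms by (intro cos_ge_zero) auto
  moreover have "0 \<le> sin t" using assms by (intro sin_ge_zero) auto
  ultimately show "0 \<le> (pi - 2 * t) * cos t + 2 * sin t" using assms by simp
  let ?g = "\<lambda>t. (pi - 2 * t) * cos t + 2 * sin t"
  have "?g t \<le> ?g 0"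
  proof (rule DERIV_nonpos_imp_nonincreasing[OF assms(1)])
    fix s assume s: "0 \<le> s" "s \<le> t"
    have "DERIV ?g s :> (- 2) * cos s + (pi - 2 * s) * (- sin s) + 2 * cos s"
      by (auto intro!: derivative_eq_intros)
    moreover have "(- 2) * cos s + (pi - 2 * s) * (- sin s) + 2 * cos s \<le> 0"
    proof -
      have "0 \<le> sin s" using s assms by (intro sin_ge_zero) auto
      moreover have "0 \<le> pi - 2 * s" using s assms by simp
      ultimately show ?thesis by (simp add: mult_nonneg_nonneg)
    qed
    ultimately show "\<exists>y. DERIV ?g s :> y \<and> y \<le> 0" by blast
  qed
  thus "(pi - 2 * t) * cos t + 2 * sin t \<le> pi" by simp
qed

lemma final_arith:
  fixes Nx Ny uu vv p f d :: real
  assumes Nx: "Nx > 0" and Ny: "Ny > 0" and d: "0 \<le> d" "d < 1/4"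
    and hu: "\<bar>uu - Nx\<^sup>2\<bar> \<le> d * Nx\<^sup>2" and hv: "\<bar>vv - Ny\<^sup>2\<bar> \<le> d * Ny\<^sup>2"
    and hp: "\<bar>p - Nx * Ny * f\<bar> \<le> d * (Nx * Ny)" and f: "0 \<le> f" "f \<le> 1"
  shows "\<bar>p / (sqrt uu * sqrt vv) - f\<bar> \<le> 4 * d"
proof -
  define D where "D = Nx * Ny"
  have D: "D > 0" using Nx Ny by (simp add: D_def)
  have uu1: "(1 - d) * Nx\<^sup>2 \<le> uu" "uu \<le> (1 + d) * Nx\<^sup>2" using hu by (auto simp: algebra_simps abs_le_iff)
  have vv1: "(1 - d) * Ny\<^sup>2 \<le> vv" "vv \<le> (1 + d) * Ny\<^sup>2" using hv by (auto simp: algebra_simps abs_le_iff)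
  have "(1 - d) * Nx\<^sup>2 \<ge> 0" "(1 - d) * Ny\<^sup>2 \<ge> 0" using d by simp_all
  hence uu0: "uu \<ge> 0" and vv0: "vv \<ge> 0" using uu1 vv1 by linarith+
  have uv_lo: "((1 - d) * D)\<^sup>2 \<le> uu * vv"
  proof -
    have "((1 - d) * D)\<^sup>2 = ((1 - d) * Nx\<^sup>2) * ((1 - d) * Ny\<^sup>2)" by (simp add: D_def power2_eq_square)
    also have "\<dots> \<le> uu * vv" using uu1 vv1 d uu0 by (intro mult_mono) auto
    finally show ?thesis .
  qed
  have uv_hi: "uu * vv \<le> ((1 + d) * D)\<^sup>2"
  proof -
    have "uu * vv \<le> ((1 + d) * Nx\<^sup>2) * ((1 + d) * Ny\<^sup>2)" using uu1 vv1 d uu0 vv0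
      by (intro mult_mono) auto
    also have "\<dots> = ((1 + d) * D)\<^sup>2" by (simp add: D_def power2_eq_square)
    finally show ?thesis .
  qed
  define Q where "Q = sqrt uu * sqrt vv"
  have uvpos: "uu * vv \<ge> 0" using uv_lo by (meson order.trans zero_le_power2)
  have Qs: "Q = sqrt (uu * vv)" by (simp add: Q_def real_sqrt_mult)
  have "sqrt (((1 - d) * D)\<^sup>2) \<le> sqrt (uu * vv)" by (rule real_sqrt_le_mono[OF uv_lo])
  hence Qlo: "(1 - d) * D \<le> Q" unfolding Qs using d D by simp
  have "sqrt (uu * vv) \<le> sqrt (((1 + d) * D)\<^sup>2)" by (rule real_sqrt_le_mono[OF uv_hi])
  hence Qhi: "Q \<le> (1 + d) * D" unfolding Qs using d D by simp
  have "(1 - d) * D > 0" using d D by simp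
  hence Qpos: "Q > 0" using Qlo by linarith
  have e1: "\<bar>p / Q - f\<bar> = \<bar>p - Q * f\<bar> / Q" using Qpos by (simp add: field_simps)
  have e2: "\<bar>p - Q * f\<bar> \<le> \<bar>p - D * f\<bar> + \<bar>D - Q\<bar> * f"
  proof -
    have "p - Q * f = (p - D * f) + (D - Q) * f" by (simp add: algebra_simps)
    hence "\<bar>p - Q * f\<bar> \<le> \<bar>p - D * f\<bar> + \<bar>(D - Q) * f\<bar>" by (metis abs_triangle_ineq)
    thus ?thesis using f by (simp add: abs_mult)
  qed
  have "\<bar>D - Q\<bar> \<le> d * D" using Qlo Qhi by (auto simp: abs_le_iff algebra_simps)
  hence "\<bar>p - D * f\<bar> + \<bar>D - Q\<bar> * f \<le> d * D + d * D"
  proof -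
    assume a: "\<bar>D - Q\<bar> \<le> d * D"
    have "\<bar>D - Q\<bar> * f \<le> \<bar>D - Q\<bar>" using f by (simp add: mult_left_le)
    moreover have "\<bar>p - D * f\<bar> \<le> d * D" using hp unfolding D_def by (simp add: ac_simps)
    ultimately show ?thesis using a by linarith
  qed
  hence nn: "\<bar>p - D * f\<bar> + \<bar>D - Q\<bar> * f \<le> 2 * d * D" by linarith
  have e3: "(\<bar>p - D * f\<bar> + \<bar>D - Q\<bar> * f) / Q \<le> (2 * d * D) / ((1 - d) * D)"
    apply (rule frac_le[OF _ nn _ Qlo])
    using d D by auto
  have e4: "(2 * d * D) / ((1 - d) * D) \<le> 4 * d"
  proof -
    have "(2 * d * D) / ((1 - d) * D) = (2 * d) / (1 - d)" using D by simp
    also have "\<dots> \<le> 4 * d"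
    proof -
      have "0 \<le> d * (1 - 2 * d)" using d by simp
      hence "2 * d \<le> 4 * d * (1 - d)" by (simp add: algebra_simps)
      thus ?thesis using d by (simp add: divide_le_eq)
    qed
    finally show ?thesis .
  qed
  have "\<bar>p - Q * f\<bar> / Q \<le> (\<bar>p - D * f\<bar> + \<bar>D - Q\<bar> * f) / Q"
    using e2 Qpos by (simp add: divide_right_mono)
  hence "\<bar>p / Q - f\<bar> \<le> 4 * d" using e1 e3 e4 by linarith
  thus ?thesis unfolding Q_def .

qed

lemma cos_vangle:
  assumes "(x::real vec) \<in> carrier_vec n" "x \<noteq> 0\<^sub>v n" "y \<in> carrier_vec n" "y \<noteq> 0\<^sub>v n"
  shows "cos (vangle x y) = x \<bullet> y / (vnorm x * vnorm y)"
    and "-1 \<le> x \<bullet> y / (vnorm x * vnorm y)" "x \<bullet> y / (vnorm x * vnorm y) \<le> 1"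
proof -
  have P: "vnorm x * vnorm y > 0" using vnorm_pos assms by simp
  have h: "\<bar>x \<bullet> y\<bar> \<le> vnorm x * vnorm y" using CS assms by simp
  have "\<bar>x \<bullet> y\<bar> / (vnorm x * vnorm y) \<le> (vnorm x * vnorm y) / (vnorm x * vnorm y)"
    by (rule divide_right_mono[OF h]) (use P in simp)
  also have "\<dots> = 1" using P by (metis divide_self less_irrefl)
  also have "\<bar>x \<bullet> y\<bar> / (vnorm x * vnorm y) = \<bar>x \<bullet> y / (vnorm x * vnorm y)\<bar>" using P by simp
  finally have "\<bar>x \<bullet> y / (vnorm x * vnorm y)\<bar> \<le> 1" .
  hence "x \<bullet> y / (vnorm x * vnorm y) \<le> 1 \<and> - (x \<bullet> y / (vnorm x * vnorm y)) \<le> 1"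
    by (simp only: abs_le_iff)
  thus "-1 \<le> x \<bullet> y / (vnorm x * vnorm y)" "x \<bullet> y / (vnorm x * vnorm y) \<le> 1" by linarith+
  thus "cos (vangle x y) = x \<bullet> y / (vnorm x * vnorm y)" unfolding vangle_def by simp
qed

lemma Phi_form:
  assumes x: "(x::real vec) \<in> carrier_vec n" "x \<noteq> 0\<^sub>v n" and y: "y \<in> carrier_vec n" "y \<noteq> 0\<^sub>v n"
  shows "(Phi n x y *\<^sub>v y) \<bullet> x = vnorm x * vnorm y *
     (((pi - 2 * vangle x y) * cos (vangle x y) + 2 * sin (vangle x y)) / pi)"
proof -
  let ?t = "vangle x y"
  have M: "Mswap x y \<in> carrier_mat n n" using Mswap_carrier x y by auto
  have Pe: "Phi n x y = ((pi - 2 * ?t) / pi) \<cdot>\<^sub>m 1\<^sub>m n + (2 * sin ?t / pi) \<cdot>\<^sub>m Mswap x y"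
    unfolding Phi_def Let_def using x y by simp
  have P: "vnorm x * vnorm y > 0" using vnorm_pos x y by simp
  have yx: "y \<bullet> x = vnorm x * vnorm y * cos ?t"
    using cos_vangle(1)[OF x y] vnorm_pos[OF x] vnorm_pos[OF y] comm_scalar_prod[OF y(1) x(1)] by simp
  have "(Phi n x y *\<^sub>v y) \<bullet> x = ((pi - 2 * ?t) / pi) * (y \<bullet> x) + (2 * sin ?t / pi) * ((Mswap x y *\<^sub>v y) \<bullet> x)"
    unfolding Pe using M x y
    by (simp add: add_mult_distrib_mat_vec[of _ n n] smult_mat_vec[of _ n n] add_scalar_prod_distrib[of _ n])
  also have "\<dots> = vnorm x * vnorm y *
     (((pi - 2 * ?t) * cos ?t + 2 * sin ?t) / pi)"
    unfolding yx Mswap_form[OF x y] by (simp add: field_simps)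
  finally show ?thesis .
qed

lemma Asgn_carrier: "A \<in> carrier_mat m n \<Longrightarrow> Asgn A z \<in> carrier_mat m n"
  unfolding Asgn_def by simp

lemma rrcp_inst:
  assumes rrcp: "RRCP A Ws k n eps" and A: "A \<in> carrier_mat m n"
    and x: "x \<in> carrier_vec k" and y: "y \<in> carrier_vec k"
    and gx: "net Ws x \<in> carrier_vec n" and gy: "net Ws y \<in> carrier_vec n"
    and z: "net Ws (0\<^sub>v k) = 0\<^sub>v n"
  shows "\<bar>(Asgn A (net Ws x) *\<^sub>v net Ws x) \<bullet> (Asgn A (net Ws y) *\<^sub>v net Ws y)
           - (Phi n (net Ws x) (net Ws y) *\<^sub>v net Ws y) \<bullet> net Ws x\<bar>
         \<le> LL * eps * vnorm (net Ws y) * vnorm (net Ws x)"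
proof -
  let ?gx = "net Ws x" and ?gy = "net Ws y"
  let ?Ax = "Asgn A ?gx" and ?Ay = "Asgn A ?gy" and ?P = "Phi n ?gx ?gy"
  have Ax: "?Ax \<in> carrier_mat m n" and Ay: "?Ay \<in> carrier_mat m n" using Asgn_carrier A by auto
  have Pc: "?P \<in> carrier_mat n n"
    unfolding Phi_def Let_def using Mswap_carrier[OF gx gy] by auto
  have AA: "?Ax\<^sup>T * ?Ay \<in> carrier_mat n n" using Ax Ay by auto
  have h: "\<bar>(((?Ax\<^sup>T * ?Ay - ?P) *\<^sub>v (?gy - net Ws (0\<^sub>v k))) \<bullet> (?gx - net Ws (0\<^sub>v k)))\<bar>
        \<le> LL * eps * vnorm (?gy - net Ws (0\<^sub>v k)) * vnorm (?gx - net Ws (0\<^sub>v k))"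
  proof -
    have all: "\<And>x y x1 x2 x3 x4. x \<in> carrier_vec k \<and> y \<in> carrier_vec k \<and> x1 \<in> carrier_vec k \<and>
        x2 \<in> carrier_vec k \<and> x3 \<in> carrier_vec k \<and> x4 \<in> carrier_vec k \<Longrightarrow>
        \<bar>((((Asgn A (net Ws x))\<^sup>T * Asgn A (net Ws y) - Phi n (net Ws x) (net Ws y))
            *\<^sub>v (net Ws x1 - net Ws x2)) \<bullet> (net Ws x3 - net Ws x4))\<bar>
        \<le> LL * eps * vnorm (net Ws x1 - net Ws x2) * vnorm (net Ws x3 - net Ws x4)"
      using rrcp unfolding RRCP_def by blast
    show ?thesis by (rule all) (use x y in simp)
  qed
  have e1: "((?Ax\<^sup>T * ?Ay - ?P) *\<^sub>v ?gy) \<bullet> ?gx = ((?Ax\<^sup>T * ?Ay) *\<^sub>v ?gy) \<bullet> ?gx - (?P *\<^sub>v ?gy) \<bullet> ?gx"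
    using AA Pc gx gy by (simp add: minus_mult_distrib_mat_vec[of _ n n] minus_scalar_prod_distrib[of _ n])
  have e2: "((?Ax\<^sup>T * ?Ay) *\<^sub>v ?gy) \<bullet> ?gx = (?Ay *\<^sub>v ?gy) \<bullet> (?Ax *\<^sub>v ?gx)"
  proof -
    have "((?Ax\<^sup>T * ?Ay) *\<^sub>v ?gy) = ?Ax\<^sup>T *\<^sub>v (?Ay *\<^sub>v ?gy)"
      using Ax Ay gy by (intro assoc_mult_mat_vec) auto
    thus ?thesis using transpose_vec_mult_scalar[OF Ax gx, of "?Ay *\<^sub>v ?gy"] Ay gy by simp
  qed
  have e3: "(?Ay *\<^sub>v ?gy) \<bullet> (?Ax *\<^sub>v ?gx) = (?Ax *\<^sub>v ?gx) \<bullet> (?Ay *\<^sub>v ?gy)"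
    using Ax Ay gx gy by (intro comm_scalar_prod[of _ m]) auto
  have h2: "\<bar>((?Ax\<^sup>T * ?Ay - ?P) *\<^sub>v ?gy) \<bullet> ?gx\<bar> \<le> LL * eps * vnorm ?gy * vnorm ?gx"
    using h unfolding z minus_zero_vec[OF gx] minus_zero_vec[OF gy] .
  show ?thesis using h2 unfolding e1 e2 e3 .
qed

theorem lemma15:
  fixes Ws :: "real mat list" and ns :: "nat list" and A :: "real mat"
    and k n m :: nat and eps :: real
  assumes eps_pos: "0 < eps" and eps_small: "eps < 1 / (4 * LL)"
    and d_pos: "Ws \<noteq> []"
    and ns_len: "length ns = length Ws + 1"
    and ns_first: "ns ! 0 = k" and ns_last: "ns ! length Ws = n"
    and ns_incr: "\<forall>i < length Ws. ns ! i < ns ! (i + 1)"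
    and Ws_dim: "\<forall>i < length Ws. Ws ! i \<in> carrier_mat (ns ! (i + 1)) (ns ! i)"
    and A_dim: "A \<in> carrier_mat m n"
    and rrcp: "RRCP A Ws k n eps"
    and wdc: "\<forall>i < length Ws. WDC (Ws ! i) eps"
  shows "\<forall>x y. x \<in> carrier_vec k \<and> y \<in> carrier_vec k \<and>
            x \<noteq> 0\<^sub>v k \<and> y \<noteq> 0\<^sub>v k \<longrightarrow>
           (let gx = net Ws x; gy = net Ws y;
                u = Asgn A gx *\<^sub>v gx; v = Asgn A gy *\<^sub>v gy in
            u \<noteq> 0\<^sub>v m \<and> v \<noteq> 0\<^sub>v m \<and>
            \<bar>cos (vangle u v) - cos (phi (vangle gx gy))\<bar> \<le> 4 * LL * eps)"
proof (intro allI impI)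
  fix x y :: "real vec"
  assume H: "x \<in> carrier_vec k \<and> y \<in> carrier_vec k \<and> x \<noteq> 0\<^sub>v k \<and> y \<noteq> 0\<^sub>v k"
  have eps_half: "eps < 1/2" using eps_small eps_pos by (simp add: LL_def)
  define d where "d = LL * eps"
  have d: "0 \<le> d" "d < 1/4" using eps_pos eps_small by (auto simp: d_def LL_def)
  have NP: "\<And>z. z \<in> carrier_vec k \<Longrightarrow> net Ws z \<in> carrier_vec n \<and> net Ws (0\<^sub>v k) = 0\<^sub>v n \<and>
            (z \<noteq> 0\<^sub>v k \<longrightarrow> net Ws z \<noteq> 0\<^sub>v n)"
    using net_props[OF ns_len Ws_dim wdc eps_half] ns_first ns_last by metis
  define gx where "gx = net Ws x"
  define gy where "gy = net Ws y"
  define u where "u = Asgn A gx *\<^sub>v gx"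
  define v where "v = Asgn A gy *\<^sub>v gy"
  have gx: "gx \<in> carrier_vec n" "gx \<noteq> 0\<^sub>v n" using NP H unfolding gx_def by auto
  have gy: "gy \<in> carrier_vec n" "gy \<noteq> 0\<^sub>v n" using NP H unfolding gy_def by auto
  have z: "net Ws (0\<^sub>v k) = 0\<^sub>v n" using NP H by auto
  have u: "u \<in> carrier_vec m" unfolding u_def by (rule mult_mat_vec_carrier[OF Asgn_carrier[OF A_dim] gx(1)])
  have v: "v \<in> carrier_vec m" unfolding v_def by (rule mult_mat_vec_carrier[OF Asgn_carrier[OF A_dim] gy(1)])
  have Nx: "vnorm gx > 0" using vnorm_pos gx by blast
  have Ny: "vnorm gy > 0" using vnorm_pos gy by blast
  have Pxx: "(Phi n gx gx *\<^sub>v gx) \<bullet> gx = (vnorm gx)\<^sup>2"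
    using Phi_form[OF gx gx] vangle_self[OF gx] by (simp add: power2_eq_square)
  have Pyy: "(Phi n gy gy *\<^sub>v gy) \<bullet> gy = (vnorm gy)\<^sup>2"
    using Phi_form[OF gy gy] vangle_self[OF gy] by (simp add: power2_eq_square)
  have ruu: "\<bar>u \<bullet> u - (vnorm gx)\<^sup>2\<bar> \<le> d * (vnorm gx)\<^sup>2"
    using rrcp_inst[OF rrcp A_dim, of x x] H NP z Pxx
    unfolding u_def gx_def d_def by (simp add: power2_eq_square mult.assoc)
  have rvv: "\<bar>v \<bullet> v - (vnorm gy)\<^sup>2\<bar> \<le> d * (vnorm gy)\<^sup>2"
    using rrcp_inst[OF rrcp A_dim, of y y] H NP z Pyy
    unfolding v_def gy_def d_def by (simp add: power2_eq_square mult.assoc)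
  define t where "t = vangle gx gy"
  define f where "f = ((pi - 2 * t) * cos t + 2 * sin t) / pi"
  have ruv: "\<bar>u \<bullet> v - vnorm gx * vnorm gy * f\<bar> \<le> d * (vnorm gx * vnorm gy)"
    using rrcp_inst[OF rrcp A_dim, of x y] H NP z Phi_form[OF gx gy]
    unfolding u_def v_def gx_def gy_def d_def t_def f_def by (simp add: ac_simps)
  have c0: "gx \<bullet> gy \<ge> 0"
  proof -
    have "\<And>i. i < n \<Longrightarrow> gx $ i \<ge> 0" using net_nonneg[OF d_pos] gx unfolding gx_def by auto
    moreover have "\<And>i. i < n \<Longrightarrow> gy $ i \<ge> 0" using net_nonneg[OF d_pos] gy unfolding gy_def by auto
    ultimately show ?thesis unfolding scalar_prod_def using gy by (auto intro!: sum_nonneg)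
  qed
  have c: "0 \<le> gx \<bullet> gy / (vnorm gx * vnorm gy)" "gx \<bullet> gy / (vnorm gx * vnorm gy) \<le> 1"
    using c0 Nx Ny cos_vangle(3)[OF gx gy] by auto
  have t: "0 \<le> t" "t \<le> pi/2" unfolding t_def vangle_def
    using c arccos_lbound arccos_le_pi2 by auto
  have fb: "0 \<le> f" "f \<le> 1" using g_bound[OF t] unfolding f_def by auto
  have cphi: "cos (phi t) = f" unfolding phi_def f_def[symmetric] using fb by simp
  have uu_pos: "u \<bullet> u > 0"
  proof -
    have "(1 - d) * (vnorm gx)\<^sup>2 \<le> u \<bullet> u" using ruu by (auto simp: algebra_simps abs_le_iff)
    moreover have "(1 - d) * (vnorm gx)\<^sup>2 > 0" using d Nx by simp
    ultimately show ?thesis by linarith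
  qed
  have vv_pos: "v \<bullet> v > 0"
  proof -
    have "(1 - d) * (vnorm gy)\<^sup>2 \<le> v \<bullet> v" using rvv by (auto simp: algebra_simps abs_le_iff)
    moreover have "(1 - d) * (vnorm gy)\<^sup>2 > 0" using d Ny by simp
    ultimately show ?thesis by linarith
  qed
  have u0: "u \<noteq> 0\<^sub>v m" using uu_pos u by auto
  have v0: "v \<noteq> 0\<^sub>v m" using vv_pos v by auto
  have cuv: "cos (vangle u v) = u \<bullet> v / (sqrt (u \<bullet> u) * sqrt (v \<bullet> v))"
    using cos_vangle(1)[OF u u0 v v0] unfolding vnorm_def .
  have "\<bar>u \<bullet> v / (sqrt (u \<bullet> u) * sqrt (v \<bullet> v)) - f\<bar> \<le> 4 * d"
    by (rule final_arith[OF Nx Ny d ruu rvv ruv fb])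
  hence "\<bar>cos (vangle u v) - cos (phi (vangle gx gy))\<bar> \<le> 4 * LL * eps"
    using cuv cphi unfolding t_def d_def by simp
  thus "let gx = net Ws x; gy = net Ws y;
                u = Asgn A gx *\<^sub>v gx; v = Asgn A gy *\<^sub>v gy in
            u \<noteq> 0\<^sub>v m \<and> v \<noteq> 0\<^sub>v m \<and>
            \<bar>cos (vangle u v) - cos (phi (vangle gx gy))\<bar> \<le> 4 * LL * eps"
    using u0 v0 unfolding Let_def u_def v_def gx_def gy_def by simp
qed

end
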